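(* Let $S = \{ x \in \mathbb{R}^n \mid h_i^T x \leq 1,\ i = 1, \dots ,r \}$, $A \in \mathbb{R}^{n \times n}$, $\gamma \geq 0$, $c \in \mathbb{R}^n$, and consider the semidefinite program \begin{align*} \min_{x \in \mathbb{R}^n,\, Q \in \mathbb{S}^{n \times n},\, \lambda \in \mathbb{R}} \quad & c^T x\\ \textrm{s.t.} \quad & Q \succ 0, \\ & \begin{bmatrix} Q - A Q A^T & -A Q \\ -Q A^T & -Q \end{bmatrix} \succeq \lambda \begin{bmatrix} \gamma^2 I & 0 \\ 0 & -I \end{bmatrix}, \\ & h_i^T Q h_i \leq 1 \quad i = 1, \dots, r, \\ & \begin{bmatrix} Q & x \\ x^T & 1 \end{bmatrix} \succeq 0, \\ & \lambda \geq 0. \end{align*} Let $\tilde{S}^{\infty}_{\gamma}(A)$ be the projection to $x$-space of the feasible region of this program, and let $S^{\infty}_{\gamma}(A)$ be the set of $x \in S$ such that $f^t(x) \in S$ for all $t = 1,2,\dots$ and all maps $f(x) = Ax + g(x)$ with $g \in \{ g : \mathbb{R}^n \to \mathbb{R}^n \mid \|g(x)\| \leq \gamma \|x\|\ \forall x \in S\}$ ($\ell_2$ norm). Then $\tilde{S}^{\infty}_{\gamma}(A) \subseteq S^{\infty}_{\gamma}(A)$.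
   Context: $\mathbb{S}^{n \times n}$ denotes the space of real symmetric $n\times n$ matrices; $\succ$ and $\succeq$ denote positive definite and positive semidefinite orderings. *)

theory Defs
  imports "HOL-Analysis.Analysis"
begin

text \<open>Positive (semi)definiteness via the quadratic form (the standard definition;
  all matrices below are symmetric whenever Q is).\<close>
definition psd :: "real^'n^'n \<Rightarrow> bool" where
  "psd M \<longleftrightarrow> (\<forall>v. 0 \<le> v \<bullet> (M *v v))"

definition pd :: "real^'n^'n \<Rightarrow> bool" where
  "pd M \<longleftrightarrow> (\<forall>v. v \<noteq> 0 \<longrightarrow> 0 < v \<bullet> (M *v v))"

definition block ::
  "real^'n^'n \<Rightarrow> real^'m^'n \<Rightarrow> real^'n^'m \<Rightarrow> real^'m^'m \<Rightarrow> real^('n+'m)^('n+'m)" where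
  "block M11 M12 M21 M22 = (\<chi> i j. case i of
       Inl a \<Rightarrow> (case j of Inl b \<Rightarrow> M11$a$b | Inr b \<Rightarrow> M12$a$b)
     | Inr a \<Rightarrow> (case j of Inl b \<Rightarrow> M21$a$b | Inr b \<Rightarrow> M22$a$b))"

definition col :: "real^'n \<Rightarrow> real^unit^'n" where
  "col x = (\<chi> a u. x$a)"

definition row :: "real^'n \<Rightarrow> real^'n^unit" where
  "row x = (\<chi> u b. x$b)"

definition polyS :: "nat \<Rightarrow> (nat \<Rightarrow> real^'n) \<Rightarrow> (real^'n) set" where
  "polyS r h = {x. \<forall>i\<in>{1..r}. h i \<bullet> x \<le> 1}"

definition S_tilde :: "nat \<Rightarrow> (nat \<Rightarrow> real^'n) \<Rightarrow> real^'n^'n \<Rightarrow> real \<Rightarrow> (real^'n) set" where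
  "S_tilde r h A \<gamma> = {x. \<exists>Q (lam::real).
      transpose Q = Q \<and>
      pd Q \<and>
      psd (block (Q - A ** Q ** transpose A) (- (A ** Q)) (- (Q ** transpose A)) (- Q)
           - lam *\<^sub>R block ((\<gamma>^2) *\<^sub>R mat 1) 0 0 (- mat 1)) \<and>
      (\<forall>i\<in>{1..r}. h i \<bullet> (Q *v h i) \<le> 1) \<and>
      psd (block Q (col x) (row x) (mat 1 :: real^unit^unit)) \<and>
      lam \<ge> 0}"

definition G_set :: "(real^'n) set \<Rightarrow> real \<Rightarrow> (real^'n \<Rightarrow> real^'n) set" where
  "G_set S \<gamma> = {g. \<forall>x\<in>S. norm (g x) \<le> \<gamma> * norm x}"

definition S_inf :: "nat \<Rightarrow> (nat \<Rightarrow> real^'n) \<Rightarrow> real^'n^'n \<Rightarrow> real \<Rightarrow> (real^'n) set" where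
  "S_inf r h A \<gamma> = {x \<in> polyS r h. \<forall>g \<in> G_set (polyS r h) \<gamma>. \<forall>t::nat. t \<ge> 1 \<longrightarrow>
      ((\<lambda>y. A *v y + g y) ^^ t) x \<in> polyS r h}"

end

theory Submission
  imports Defs
begin

lemma sum_UNIV_Plus: "(\<Sum>i\<in>(UNIV::('a::finite+'b::finite) set). f i) = (\<Sum>a\<in>UNIV. f (Inl a)) + (\<Sum>b\<in>UNIV. f (Inr b))"
  using sum.Plus[of "UNIV::'a set" "UNIV::'b set" f] by (simp add: o_def)

definition upart :: "real^('n::finite+'m::finite) \<Rightarrow> real^'n" where "upart V = (\<chi> a. V$Inl a)"
definition wpart :: "real^('n::finite+'m::finite) \<Rightarrow> real^'m" where "wpart V = (\<chi> a. V$Inr a)"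
definition join :: "real^'n::finite \<Rightarrow> real^'m::finite \<Rightarrow> real^('n+'m)" where
  "join u w = (\<chi> i. case i of Inl a \<Rightarrow> u$a | Inr b \<Rightarrow> w$b)"

lemma upart_join[simp]: "upart (join u w) = u" and wpart_join[simp]: "wpart (join u w) = w"
  by (simp_all add: upart_def wpart_def join_def vec_eq_iff)

lemma quad_block:
  fixes M11 :: "real^'n^'n" and M12 :: "real^'m^'n" and M21 :: "real^'n^'m" and M22 :: "real^'m^'m"
  shows "V \<bullet> (block M11 M12 M21 M22 *v V) =
    upart V \<bullet> (M11 *v upart V) + upart V \<bullet> (M12 *v wpart V) + wpart V \<bullet> (M21 *v upart V) + wpart V \<bullet> (M22 *v wpart V)"
  by (simp add: inner_vec_def matrix_vector_mult_def block_def upart_def wpart_def sum_UNIV_Plus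
      sum_distrib_left sum_distrib_right sum.distrib algebra_simps)

lemma mvs: "((c::real) *\<^sub>R (M::real^'n^'m)) *v x = c *\<^sub>R (M *v x)"
  by (simp add: vec_eq_iff matrix_vector_mult_def sum_distrib_left mult.assoc)

lemma mvn: "(- M) *v x = - (M *v (x::real^_))"
  by (simp add: vec_eq_iff matrix_vector_mult_def sum_negf)

lemma lmi_form:
  fixes Q A :: "real^'n^'n"
  assumes "psd (block (Q - A ** Q ** transpose A) (- (A ** Q)) (- (Q ** transpose A)) (- Q)
           - lam *\<^sub>R block ((\<gamma>^2) *\<^sub>R mat 1) 0 0 (- mat 1))"
  shows "lam * (\<gamma>^2 * (u \<bullet> u) - w \<bullet> w) \<le> u \<bullet> (Q *v u) - (u v* A + w) \<bullet> (Q *v (u v* A + w))"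
proof -
  have "0 \<le> join u w \<bullet> ((block (Q - A ** Q ** transpose A) (- (A ** Q)) (- (Q ** transpose A)) (- Q)
           - lam *\<^sub>R block ((\<gamma>^2) *\<^sub>R mat 1) 0 0 (- mat 1)) *v join u w)"
    using assms unfolding psd_def by blast
  also have "\<dots> = u \<bullet> (Q *v u) - (u v* A + w) \<bullet> (Q *v (u v* A + w)) - lam * (\<gamma>^2 * (u \<bullet> u) - w \<bullet> w)"
    apply (simp add: matrix_vector_mult_diff_rdistrib inner_diff_right mvs mvn quad_block
        matrix_vector_mult_diff_distrib inner_add_left inner_add_right matrix_vector_right_distrib)
    apply (simp add: matrix_vector_mul_assoc[symmetric] dot_lmul_matrix[symmetric] algebra_simps)
    done
  finally show ?thesis by simp
qed

lemma ellip_form: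
  fixes Q :: "real^'n^'n"
  assumes "psd (block Q (col x) (row x) (mat 1 :: real^unit^unit))"
  shows "(v \<bullet> x)^2 \<le> v \<bullet> (Q *v v)"
proof -
  have "0 \<le> join v (\<chi> u. - (v \<bullet> x)) \<bullet> (block Q (col x) (row x) (mat 1 :: real^unit^unit) *v join v (\<chi> u. - (v \<bullet> x)))"
    using assms unfolding psd_def by blast
  also have "\<dots> = v \<bullet> (Q *v v) - (v \<bullet> x)^2"
    unfolding quad_block by (simp add: inner_vec_def matrix_vector_mult_def col_def row_def power2_eq_square mat_def UNIV_unit sum_negf
        sum_distrib_left sum_distrib_right algebra_simps)
  finally show ?thesis by simp
qed

lemma step_one:
  fixes Q A :: "real^'n^'n" and x g :: "real^'n"
  assumes E: "\<forall>v. (v \<bullet> x)^2 \<le> v \<bullet> (Q *v v)"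
    and L: "\<forall>u w. lam * (\<gamma>^2 * (u \<bullet> u) - w \<bullet> w) \<le> u \<bullet> (Q *v u) - (u v* A + w) \<bullet> (Q *v (u v* A + w))"
    and lam: "lam \<ge> 0" and gam: "\<gamma> \<ge> 0" and gn: "norm g \<le> \<gamma> * norm x"
  shows "(v \<bullet> (A *v x + g))^2 \<le> v \<bullet> (Q *v v)"
proof -
  have qnn: "0 \<le> u \<bullet> (Q *v u)" for u
    using E[rule_format, of u] by (meson order_trans zero_le_power2)
  have key: "u \<bullet> (A *v x + g) \<le> sqrt (u \<bullet> (Q *v u))" for u
  proof (cases "x = 0")
    case True
    then have "g = 0" using gn by simp
    then show ?thesis using True qnn[of u] by simp
  next
    case False
    then have nx: "norm x > 0" by simp
    define w where "w = (\<gamma> * norm u / norm x) *\<^sub>R x"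
    have nw: "norm w = \<gamma> * norm u" using nx gam unfolding w_def by simp
    have ww: "w \<bullet> w = \<gamma>^2 * (u \<bullet> u)"
      using nw by (simp add: power2_norm_eq_inner[symmetric] power_mult_distrib)
    have wx: "w \<bullet> x = \<gamma> * norm u * norm x"
      using nx unfolding w_def by (simp add: power2_norm_eq_inner[symmetric] power2_eq_square)
    have q1: "(u v* A + w) \<bullet> (Q *v (u v* A + w)) \<le> u \<bullet> (Q *v u)"
      using L[rule_format, of u w] ww by simp
    have "u \<bullet> g \<le> norm u * norm g" by (rule norm_cauchy_schwarz)
    also have "\<dots> \<le> norm u * (\<gamma> * norm x)" by (rule mult_left_mono[OF gn]) simp
    finally have ug: "u \<bullet> g \<le> w \<bullet> x" using wx by (simp add: mult.assoc mult.left_commute)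
    have "u \<bullet> (A *v x + g) = (u v* A) \<bullet> x + u \<bullet> g"
      by (simp add: inner_add_right dot_lmul_matrix)
    also have "\<dots> \<le> (u v* A + w) \<bullet> x" using ug by (simp add: inner_add_left)
    also have "\<dots> \<le> sqrt (((u v* A + w) \<bullet> x)^2)" by simp
    also have "\<dots> \<le> sqrt ((u v* A + w) \<bullet> (Q *v (u v* A + w)))"
      using E by (simp del: real_sqrt_abs)
    also have "\<dots> \<le> sqrt (u \<bullet> (Q *v u))" using q1 by simp
    finally show ?thesis .
  qed
  have qneg: "(-v) \<bullet> (Q *v (-v)) = v \<bullet> (Q *v v)"
  proof -
    have "Q *v (-v) = - (Q *v v)" by (simp add: matrix_vector_mult_def vec_eq_iff sum_negf)
    then show ?thesis by simp
  qed
  have "\<bar>v \<bullet> (A *v x + g)\<bar> \<le> sqrt (v \<bullet> (Q *v v))"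
    using key[of v] key[of "-v"] qneg by (simp add: abs_le_iff)
  then have "\<bar>v \<bullet> (A *v x + g)\<bar>^2 \<le> (sqrt (v \<bullet> (Q *v v)))^2"
    by (rule power_mono) simp
  then show ?thesis using qnn[of v] by simp
qed

theorem lemma26:
  fixes h :: "nat \<Rightarrow> real^'n" and r :: nat and A :: "real^'n^'n" and \<gamma> :: real
  assumes "\<gamma> \<ge> 0"
  shows "S_tilde r h A \<gamma> \<subseteq> S_inf r h A \<gamma>"
proof
  fix x assume "x \<in> S_tilde r h A \<gamma>"
  then obtain Q lam where
    P1: "psd (block (Q - A ** Q ** transpose A) (- (A ** Q)) (- (Q ** transpose A)) (- Q)
           - lam *\<^sub>R block ((\<gamma>^2) *\<^sub>R mat 1) 0 0 (- mat 1))"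
    and Ph: "\<forall>i\<in>{1..r}. h i \<bullet> (Q *v h i) \<le> 1"
    and P2: "psd (block Q (col x) (row x) (mat 1 :: real^unit^unit))"
    and lam: "lam \<ge> 0"
    unfolding S_tilde_def by blast
  have L: "\<forall>u w. lam * (\<gamma>^2 * (u \<bullet> u) - w \<bullet> w) \<le> u \<bullet> (Q *v u) - (u v* A + w) \<bullet> (Q *v (u v* A + w))"
    using lmi_form[OF P1] by blast
  have E0: "\<forall>v. (v \<bullet> x)^2 \<le> v \<bullet> (Q *v v)" using ellip_form[OF P2] by blast
  have inS: "y \<in> polyS r h" if Ey: "\<forall>v. (v \<bullet> y)^2 \<le> v \<bullet> (Q *v v)" for y
    unfolding polyS_def
  proof safe
    fix i assume i: "i \<in> {1..r}"
    have "h i \<bullet> y \<le> sqrt ((h i \<bullet> y)^2)" by simp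
    also have "\<dots> \<le> sqrt (h i \<bullet> (Q *v h i))" using Ey by (simp del: real_sqrt_abs)
    also have "\<dots> \<le> 1" using Ph i by simp
    finally show "h i \<bullet> y \<le> 1" .
  qed
  show "x \<in> S_inf r h A \<gamma>"
    unfolding S_inf_def
  proof (intro CollectI conjI ballI allI impI)
    show "x \<in> polyS r h" using inS E0 by blast
    fix g t assume g: "g \<in> G_set (polyS r h) \<gamma>"
    have "\<forall>v. (v \<bullet> (((\<lambda>y. A *v y + g y) ^^ t) x))^2 \<le> v \<bullet> (Q *v v)"
    proof (induction t)
      case 0
      then show ?case using E0 by simp
    next
      case (Suc t)
      define y where "y = ((\<lambda>y. A *v y + g y) ^^ t) x"
      have "y \<in> polyS r h" using inS Suc.IH unfolding y_def by blast
      then have gn: "norm (g y) \<le> \<gamma> * norm y" using g unfolding G_set_def by blast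
      have "\<forall>v. (v \<bullet> (A *v y + g y))^2 \<le> v \<bullet> (Q *v v)"
        using step_one[OF _ L lam assms gn] Suc.IH unfolding y_def by blast
      then show ?case unfolding y_def by simp
    qed
    then show "((\<lambda>y. A *v y + g y) ^^ t) x \<in> polyS r h" using inS by blast
  qed
qed

end
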